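(* Let $k\ge2$. The first-order group formula $\alpha(x)=\forall y\,([y^{-1}xy,x]=e)$ defines in $BS(1,k)$ the subgroup $A$, i.e. $\{g\in BS(1,k): BS(1,k)\models\alpha(g)\}=A$.
   Context: $BS(1,k)=\langle a,b\mid b^{-1}ab=a^k\rangle$, identified with $\mathbb{Z}[1/k]\rtimes\mathbb{Z}$ (pairs $(y,m)$, product $(y_1,m_1)(y_2,m_2)=(y_1+y_2k^{-m_1},m_1+m_2)$), with $a=(1,0)$, $b=(0,1)$. $A$ is the normal closure of $a$, equal to $\{(y,0):y\in\mathbb{Z}[1/k]\}$. The commutator is $[x,y]=x^{-1}y^{-1}xy$. *)

theory Defs
  imports Complex_Main "HOL-Algebra.Group"
begin

definition Zinv :: "int \<Rightarrow> rat set" where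
  "Zinv k = {q. \<exists>(n::int) (m::nat). q = of_int n / (of_int k) ^ m}"

text \<open>BS(1,k) = Z[1/k] semidirect Z, pairs (y,m) with
  (y1,m1)(y2,m2) = (y1 + y2 k^(-m1), m1+m2).\<close>
definition BS :: "int \<Rightarrow> (rat \<times> int) monoid" where
  "BS k = \<lparr> carrier = Zinv k \<times> UNIV,
            mult = (\<lambda>(y1,m1) (y2,m2). (y1 + y2 * (of_int k) powi (- m1), m1 + m2)),
            one = (0, 0) \<rparr>"

definition commutator :: "('a, 'b) monoid_scheme \<Rightarrow> 'a \<Rightarrow> 'a \<Rightarrow> 'a" where
  "commutator G x y = inv\<^bsub>G\<^esub> x \<otimes>\<^bsub>G\<^esub> inv\<^bsub>G\<^esub> y \<otimes>\<^bsub>G\<^esub> x \<otimes>\<^bsub>G\<^esub> y"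

text \<open>The subgroup A = normal closure of a = {(y,0) : y in Z[1/k]}.\<close>
definition BS_A :: "int \<Rightarrow> (rat \<times> int) set" where
  "BS_A k = {(y, 0) | y. y \<in> Zinv k}"

end

theory Submission
  imports Defs
begin

lemma Zinv_add:
  assumes k: "k \<noteq> 0" and a: "a \<in> Zinv k" and b: "b \<in> Zinv k"
  shows "a + b \<in> Zinv k"
proof -
  obtain n1 m1 where 1: "a = of_int n1 / (of_int k)^m1" using a unfolding Zinv_def by auto
  obtain n2 m2 where 2: "b = of_int n2 / (of_int k)^m2" using b unfolding Zinv_def by auto
  have "a + b = of_int (n1 * k^m2 + n2 * k^m1) / (of_int k)^(m1+m2)"
    using k by (simp add: 1 2 field_simps power_add)
  then show ?thesis unfolding Zinv_def by blast
qed

lemma Zinv_neg: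
  assumes a: "a \<in> Zinv k" shows "- a \<in> Zinv k"
proof -
  obtain n1 m1 where 1: "a = of_int n1 / (of_int k)^m1" using a unfolding Zinv_def by auto
  have "-a = of_int (-n1) / (of_int k)^m1" by (simp add: 1)
  then show ?thesis unfolding Zinv_def by blast
qed

lemma Zinv_int: "of_int n \<in> Zinv k"
  unfolding Zinv_def by (rule CollectI, rule exI[of _ n], rule exI[of _ 0], simp)

lemma Zinv_powi:
  assumes k: "k \<noteq> 0" and a: "a \<in> Zinv k"
  shows "a * (of_int k) powi j \<in> Zinv k"
proof -
  obtain n1 m1 where 1: "a = of_int n1 / (of_int k)^m1" using a unfolding Zinv_def by auto
  show ?thesis
  proof (cases "j \<ge> 0")
    case True
    then have "a * (of_int k) powi j = of_int (n1 * k ^ nat j) / (of_int k)^m1"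
      by (simp add: 1 power_int_def)
    then show ?thesis unfolding Zinv_def by blast
  next
    case False
    then have "a * (of_int k) powi j = of_int n1 / (of_int k)^(m1 + nat (-j))"
      using k by (simp add: 1 power_int_def power_add field_simps power_inverse)
    then show ?thesis unfolding Zinv_def by blast
  qed
qed

lemma powi_split:
  assumes "(k::int) \<noteq> 0"
  shows "(of_int k :: rat) powi (- a - b) = (of_int k) powi (- a) * (of_int k) powi (- b)"
  using power_int_add[of "of_int k :: rat" "-a" "-b"] assms by simp

lemma BS_group:
  assumes k: "k \<noteq> 0" shows "group (BS k)"
proof (rule groupI)
  fix x y assume "x \<in> carrier (BS k)" "y \<in> carrier (BS k)"
  then show "x \<otimes>\<^bsub>BS k\<^esub> y \<in> carrier (BS k)"
    using k by (auto simp: BS_def intro!: Zinv_add Zinv_powi)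
next
  show "\<one>\<^bsub>BS k\<^esub> \<in> carrier (BS k)" using Zinv_int[of 0 k] by (simp add: BS_def)
next
  fix x y z assume "x \<in> carrier (BS k)" "y \<in> carrier (BS k)" "z \<in> carrier (BS k)"
  then show "x \<otimes>\<^bsub>BS k\<^esub> y \<otimes>\<^bsub>BS k\<^esub> z = x \<otimes>\<^bsub>BS k\<^esub> (y \<otimes>\<^bsub>BS k\<^esub> z)"
    using k by (auto simp: BS_def powi_split algebra_simps)
next
  fix x assume "x \<in> carrier (BS k)"
  then show "\<one>\<^bsub>BS k\<^esub> \<otimes>\<^bsub>BS k\<^esub> x = x" by (auto simp: BS_def)
next
  fix x assume x: "x \<in> carrier (BS k)"
  obtain z j where xz: "x = (z, j)" by fastforce
  have z: "z \<in> Zinv k" using x xz by (simp add: BS_def)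
  have "(- z * (of_int k) powi j, - j) \<in> carrier (BS k)"
    using Zinv_powi[OF k Zinv_neg[OF z]] by (simp add: BS_def)
  moreover have "(- z * (of_int k) powi j, - j) \<otimes>\<^bsub>BS k\<^esub> x = \<one>\<^bsub>BS k\<^esub>"
    using k by (simp add: BS_def xz power_int_minus)
  ultimately show "\<exists>y \<in> carrier (BS k). y \<otimes>\<^bsub>BS k\<^esub> x = \<one>\<^bsub>BS k\<^esub>" by blast
qed

lemma BS_mult: "(a, m) \<otimes>\<^bsub>BS k\<^esub> (b, n) = (a + b * (of_int k) powi (- m), m + n)"
  by (simp add: BS_def)

lemma BS_inv:
  assumes k: "k \<noteq> 0" and z: "z \<in> Zinv k"
  shows "inv\<^bsub>BS k\<^esub> (z, j) = (- z * (of_int k) powi j, - j)"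
proof -
  interpret group "BS k" using BS_group[OF k] .
  have "(- z * (of_int k) powi j, - j) \<in> carrier (BS k)"
    using Zinv_powi[OF k Zinv_neg[OF z]] by (simp add: BS_def)
  moreover have "(- z * (of_int k) powi j, - j) \<otimes>\<^bsub>BS k\<^esub> (z, j) = \<one>\<^bsub>BS k\<^esub>"
    using k by (simp add: BS_def power_int_minus)
  moreover have "(z, j) \<in> carrier (BS k)" using z by (simp add: BS_def)
  ultimately show ?thesis using inv_equality by blast
qed

lemma comm_one_iff:
  assumes "group G" "h \<in> carrier G" "g \<in> carrier G"
  shows "commutator G h g = \<one>\<^bsub>G\<^esub> \<longleftrightarrow> h \<otimes>\<^bsub>G\<^esub> g = g \<otimes>\<^bsub>G\<^esub> h"
proof -
  interpret group G by fact
  have e: "commutator G h g = inv\<^bsub>G\<^esub> (g \<otimes>\<^bsub>G\<^esub> h) \<otimes>\<^bsub>G\<^esub> (h \<otimes>\<^bsub>G\<^esub> g)"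
    using assms by (simp add: commutator_def inv_mult_group m_assoc)
  show ?thesis unfolding e
  proof
    assume a: "inv\<^bsub>G\<^esub> (g \<otimes>\<^bsub>G\<^esub> h) \<otimes>\<^bsub>G\<^esub> (h \<otimes>\<^bsub>G\<^esub> g) = \<one>\<^bsub>G\<^esub>"
    have "h \<otimes>\<^bsub>G\<^esub> g = (g \<otimes>\<^bsub>G\<^esub> h) \<otimes>\<^bsub>G\<^esub> (inv\<^bsub>G\<^esub> (g \<otimes>\<^bsub>G\<^esub> h) \<otimes>\<^bsub>G\<^esub> (h \<otimes>\<^bsub>G\<^esub> g))"
      using assms by (simp add: m_assoc[symmetric])
    then show "h \<otimes>\<^bsub>G\<^esub> g = g \<otimes>\<^bsub>G\<^esub> h" using a assms by simp
  next
    assume "h \<otimes>\<^bsub>G\<^esub> g = g \<otimes>\<^bsub>G\<^esub> h"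
    then show "inv\<^bsub>G\<^esub> (g \<otimes>\<^bsub>G\<^esub> h) \<otimes>\<^bsub>G\<^esub> (h \<otimes>\<^bsub>G\<^esub> g) = \<one>\<^bsub>G\<^esub>"
      using assms by simp
  qed
qed

lemma powi_ne_one:
  assumes "(k::int) \<ge> 2" "n \<noteq> 0"
  shows "(of_int k :: rat) powi n \<noteq> 1"
proof (cases "n > 0")
  case True
  have "(1::rat) < (of_int k) ^ nat n"
    using assms True by (intro one_less_power) auto
  then show ?thesis using True by (simp add: power_int_def)
next
  case False
  have "(inverse (of_int k :: rat)) ^ nat (-n) < 1"
  proof -
    have "(1::rat) < of_int k" using assms by simp
    then have "0 \<le> inverse (of_int k :: rat)" "inverse (of_int k :: rat) < 1"
      by (simp_all add: inverse_less_1_iff)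
    then show ?thesis using power_less_one_iff[of "inverse (of_int k :: rat)" "nat (-n)"] False assms(2)
      by simp
  qed
  then show ?thesis using False assms(2) by (simp add: power_int_def)
qed

theorem lemma4p4:
  fixes k :: int
  assumes "k \<ge> 2"
  shows "{g \<in> carrier (BS k). \<forall>y \<in> carrier (BS k).
            commutator (BS k) (inv\<^bsub>BS k\<^esub> y \<otimes>\<^bsub>BS k\<^esub> g \<otimes>\<^bsub>BS k\<^esub> y) g = \<one>\<^bsub>BS k\<^esub>}
         = BS_A k"
proof -
  have k: "k \<noteq> 0" using assms by simp
  interpret G: group "BS k" using BS_group[OF k] .
  show ?thesis
  proof (intro equalityI subsetI)
    fix g assume "g \<in> {g \<in> carrier (BS k). \<forall>y \<in> carrier (BS k).
            commutator (BS k) (inv\<^bsub>BS k\<^esub> y \<otimes>\<^bsub>BS k\<^esub> g \<otimes>\<^bsub>BS k\<^esub> y) g = \<one>\<^bsub>BS k\<^esub>}"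
    then have gc: "g \<in> carrier (BS k)" and H: "\<And>y. y \<in> carrier (BS k) \<Longrightarrow>
            commutator (BS k) (inv\<^bsub>BS k\<^esub> y \<otimes>\<^bsub>BS k\<^esub> g \<otimes>\<^bsub>BS k\<^esub> y) g = \<one>\<^bsub>BS k\<^esub>"
      by auto
    obtain x m where g: "g = (x, m)" by fastforce
    have x: "x \<in> Zinv k" using gc g by (simp add: BS_def)
    have m0: "m = 0"
    proof (rule ccontr)
      assume m: "m \<noteq> 0"
      have one: "(1::rat) \<in> Zinv k" using Zinv_int[of 1 k] by simp
      have yc: "(1, 0) \<in> carrier (BS k)" using one by (simp add: BS_def)
      define h where "h = inv\<^bsub>BS k\<^esub> (1, 0) \<otimes>\<^bsub>BS k\<^esub> g \<otimes>\<^bsub>BS k\<^esub> (1, 0)"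
      have hc: "h \<in> carrier (BS k)" unfolding h_def using yc gc by simp
      have hv: "h = (-1 + x + (of_int k) powi (- m), m)"
        unfolding h_def g using BS_inv[OF k one, of 0] by (simp add: BS_mult)
      have "h \<otimes>\<^bsub>BS k\<^esub> g = g \<otimes>\<^bsub>BS k\<^esub> h"
        using H[OF yc] comm_one_iff[OF BS_group[OF k] hc gc] h_def by simp
      then have "(-1 + x + (of_int k) powi (- m)) + x * (of_int k) powi (- m)
                 = x + (-1 + x + (of_int k) powi (- m)) * (of_int k) powi (- m)"
        unfolding hv g BS_mult by simp
      then have "((of_int k) powi (- m) - 1) * ((of_int k) powi (- m) - 1) = (0::rat)"
        by (simp add: algebra_simps)
      then have "(of_int k :: rat) powi (- m) = 1" by simp
      then show False using powi_ne_one[OF assms, of "-m"] m by simp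
    qed
    show "g \<in> BS_A k" unfolding BS_A_def using g m0 x by simp
  next
    fix g assume "g \<in> BS_A k"
    then obtain x where g: "g = (x, 0)" and x: "x \<in> Zinv k" unfolding BS_A_def by auto
    have gc: "g \<in> carrier (BS k)" using g x by (simp add: BS_def)
    have "commutator (BS k) (inv\<^bsub>BS k\<^esub> y \<otimes>\<^bsub>BS k\<^esub> g \<otimes>\<^bsub>BS k\<^esub> y) g = \<one>\<^bsub>BS k\<^esub>"
      if yc: "y \<in> carrier (BS k)" for y
    proof -
      obtain z j where y: "y = (z, j)" by fastforce
      have z: "z \<in> Zinv k" using yc y by (simp add: BS_def)
      define h where "h = inv\<^bsub>BS k\<^esub> y \<otimes>\<^bsub>BS k\<^esub> g \<otimes>\<^bsub>BS k\<^esub> y"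
      have hc: "h \<in> carrier (BS k)" unfolding h_def using yc gc by simp
      have "snd h = 0" unfolding h_def y g BS_inv[OF k z] by (simp add: BS_mult)
      then obtain u where hv: "h = (u, 0)" by (metis prod.collapse)
      have "h \<otimes>\<^bsub>BS k\<^esub> g = g \<otimes>\<^bsub>BS k\<^esub> h" unfolding hv g BS_mult by simp
      then show ?thesis using comm_one_iff[OF BS_group[OF k] hc gc] h_def by simp
    qed
    then show "g \<in> {g \<in> carrier (BS k). \<forall>y \<in> carrier (BS k).
            commutator (BS k) (inv\<^bsub>BS k\<^esub> y \<otimes>\<^bsub>BS k\<^esub> g \<otimes>\<^bsub>BS k\<^esub> y) g = \<one>\<^bsub>BS k\<^esub>}"
      using gc by blast
  qed
qed

end
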